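(* Every execution path of a cellular multipointed $d$-space $X_\lambda$ is locally injective.
   Context: Work in $\mathbf{Top}$, the category of $\Delta$-generated spaces (or $\Delta$-Hausdorff $\Delta$-generated spaces). $\mathcal{G}(1,1)$: nondecreasing homeomorphisms of $[0,1]$; $*_N$: normalized composition of paths on $[0,1]$ (first on $[0,1/2]$, second on $[1/2,1]$, double speed). A multipointed $d$-space $X=(|X|,X^0,\mathbb{P}^{\mathcal{G}}X)$: a space, a subset of states, a set of continuous execution paths $[0,1]\to|X|$ with endpoints in $X^0$, stable under precomposition by $\mathcal{G}(1,1)$ and $*_N$. Colimits: underlying spaces and states by colimits, execution paths generated by images under $*_N$ and reparametrization. ${\rm Glob}^{\mathcal{G}}(Z)$: quotient of $\{0,1\}\sqcup Z\times[0,1]$ with $(z,0)\sim0$, $(z,1)\sim1$, states $\{0,1\}$, paths $t\mapsto(z,\phi(t))$, $\phi\in\mathcal{G}(1,1)$. Cellular: $X_\lambda=\varinjlim_{\nu<\lambda}X_\nu$ for an ordinal $\lambda$ and colimit-preserving $\nu\mapsto X_\nu$ with $X_0=(X^0,X^0,\varnothing)$ a set and each $X_\nu\to X_{\nu+1}$ a pushout of some ${\rm Glob}^{\mathcal{G}}(\mathbf{S}^{n_\nu-1})\subset{\rm Glob}^{\mathcal{G}}(\mathbf{D}^{n_\nu})$. *)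

theory Defs
  imports "HOL-Analysis.Analysis"
begin

definition G11 :: "(real \<Rightarrow> real) set" where
  "G11 = {\<phi>. homeomorphic_map (top_of_set {0..1}) (top_of_set {0..1}) \<phi> \<and> mono_on {0..1} \<phi>}"

definition ncomp :: "(real \<Rightarrow> 'a) \<Rightarrow> (real \<Rightarrow> 'a) \<Rightarrow> real \<Rightarrow> 'a" (infixl "*N" 70) where
  "(p *N q) = (\<lambda>t. if t \<le> 1/2 then p (2 * t) else q (2 * t - 1))"

record 'a mdspace =
  space :: "'a topology"
  states :: "'a set"
  paths :: "(real \<Rightarrow> 'a) set"

definition mdspace :: "'a mdspace \<Rightarrow> bool" where
  "mdspace X \<longleftrightarrow>
     states X \<subseteq> topspace (space X) \<and>
     (\<forall>p\<in>paths X. continuous_map (top_of_set {0..1}) (space X) p \<and>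
                   p 0 \<in> states X \<and> p 1 \<in> states X) \<and>
     (\<forall>p\<in>paths X. \<forall>\<phi>\<in>G11. p \<circ> \<phi> \<in> paths X) \<and>
     (\<forall>p\<in>paths X. \<forall>q\<in>paths X. p 1 = q 0 \<longrightarrow> p *N q \<in> paths X)"

definition mdmap :: "'a mdspace \<Rightarrow> 'b mdspace \<Rightarrow> ('a \<Rightarrow> 'b) \<Rightarrow> bool" where
  "mdmap X Y f \<longleftrightarrow>
     continuous_map (space X) (space Y) f \<and>
     f ` states X \<subseteq> states Y \<and>
     (\<forall>p\<in>paths X. f \<circ> p \<in> paths Y)"

inductive_set gen_paths :: "(real \<Rightarrow> 'a) set \<Rightarrow> (real \<Rightarrow> 'a) set" for B where
  base: "p \<in> B \<Longrightarrow> p \<in> gen_paths B"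
| reparam: "p \<in> gen_paths B \<Longrightarrow> \<phi> \<in> G11 \<Longrightarrow> p \<circ> \<phi> \<in> gen_paths B"
| concat: "p \<in> gen_paths B \<Longrightarrow> q \<in> gen_paths B \<Longrightarrow> p 1 = q 0 \<Longrightarrow> p *N q \<in> gen_paths B"

text \<open>Points of Glob(Z): the two states 0, 1 and the classes (z,t) with 0<t<1.\<close>
datatype gpt = G0 | G1 | GM "nat \<Rightarrow> real" real

definition glob_q :: "(nat \<Rightarrow> real) \<Rightarrow> real \<Rightarrow> gpt" where
  "glob_q z t = (if t = 0 then G0 else if t = 1 then G1 else GM z t)"

definition glob_carrier :: "(nat \<Rightarrow> real) topology \<Rightarrow> gpt set" where
  "glob_carrier Z = {G0, G1} \<union> {GM z t | z t. z \<in> topspace Z \<and> 0 < t \<and> t < 1}"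

text \<open>Quotient topology of the disjoint union of the discrete space {0,1} and
  Z x [0,1] under (z,0) ~ 0 and (z,1) ~ 1.\<close>
definition glob_topology :: "(nat \<Rightarrow> real) topology \<Rightarrow> gpt topology" where
  "glob_topology Z = topology (\<lambda>U. U \<subseteq> glob_carrier Z \<and>
      openin (prod_topology Z (top_of_set {0..1}))
        {(z, t). z \<in> topspace Z \<and> t \<in> {0..1} \<and> glob_q z t \<in> U})"

definition Glob :: "(nat \<Rightarrow> real) topology \<Rightarrow> gpt mdspace" where
  "Glob Z = \<lparr> space = glob_topology Z,
              states = {G0, G1},
              paths = {(\<lambda>t. glob_q z (\<phi> t)) | z \<phi>. z \<in> topspace Z \<and> \<phi> \<in> G11} \<rparr>"

text \<open>The (n-1)-sphere and the n-disk in R^n (S^{-1} is empty, D^0 a point).\<close>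
definition sphere_m1 :: "nat \<Rightarrow> (nat \<Rightarrow> real) topology" where
  "sphere_m1 n = subtopology (Euclidean_space n) {x. (\<Sum>i<n. (x i)\<^sup>2) = 1}"

definition disk :: "nat \<Rightarrow> (nat \<Rightarrow> real) topology" where
  "disk n = subtopology (Euclidean_space n) {x. (\<Sum>i<n. (x i)\<^sup>2) \<le> 1}"

text \<open>Y together with f : X \<rightarrow> Y and g : Glob(D^n) \<rightarrow> Y is the pushout of
  X \<leftarrow> Glob(S^{n-1}) \<subseteq> Glob(D^n) along the attaching map a
  (colimits computed as stated: underlying spaces and states by colimits,
  execution paths generated).  Since Glob(S^{n-1}) \<rightarrow> Glob(D^n) is injective,
  the pushout of underlying sets is described explicitly.\<close>
definition cell_pushout ::
  "'a mdspace \<Rightarrow> nat \<Rightarrow> (gpt \<Rightarrow> 'a) \<Rightarrow> 'a mdspace \<Rightarrow> ('a \<Rightarrow> 'a) \<Rightarrow> (gpt \<Rightarrow> 'a) \<Rightarrow> bool" where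
  "cell_pushout X n a Y f g \<longleftrightarrow>
     (let S = Glob (sphere_m1 n); D = Glob (disk n);
          XS = topspace (space X); DS = topspace (space D); SS = topspace (space S) in
     mdmap S X a \<and> mdmap X Y f \<and> mdmap D Y g \<and>
     (\<forall>b\<in>SS. g b = f (a b)) \<and>
     topspace (space Y) = f ` XS \<union> g ` DS \<and>
     inj_on f XS \<and> inj_on g (DS - SS) \<and> f ` XS \<inter> g ` (DS - SS) = {} \<and>
     (\<forall>U. openin (space Y) U \<longleftrightarrow>
            U \<subseteq> topspace (space Y) \<and>
            openin (space X) {x \<in> XS. f x \<in> U} \<and>
            openin (space D) {b \<in> DS. g b \<in> U}) \<and>
     states Y = f ` states X \<union> g ` states D \<and>
     paths Y = gen_paths ((\<lambda>p. f \<circ> p) ` paths X \<union> (\<lambda>p. g \<circ> p) ` paths D))"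

definition chain_colimit ::
  "'o::wellorder \<Rightarrow> ('o \<Rightarrow> 'a mdspace) \<Rightarrow> ('o \<Rightarrow> 'o \<Rightarrow> 'a \<Rightarrow> 'a) \<Rightarrow> 'a mdspace \<Rightarrow> ('o \<Rightarrow> 'a \<Rightarrow> 'a) \<Rightarrow> bool" where
  "chain_colimit \<nu> X f Y c \<longleftrightarrow>
     topspace (space Y) = (\<Union>\<mu>\<in>{..<\<nu>}. c \<mu> ` topspace (space (X \<mu>))) \<and>
     (\<forall>\<mu><\<nu>. \<forall>\<rho><\<nu>. \<forall>x\<in>topspace (space (X \<mu>)). \<forall>y\<in>topspace (space (X \<rho>)).
         c \<mu> x = c \<rho> y \<longleftrightarrow> (\<exists>\<sigma>. \<mu> \<le> \<sigma> \<and> \<rho> \<le> \<sigma> \<and> \<sigma> < \<nu> \<and> f \<mu> \<sigma> x = f \<rho> \<sigma> y)) \<and>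
     (\<forall>U. openin (space Y) U \<longleftrightarrow>
            U \<subseteq> topspace (space Y) \<and>
            (\<forall>\<mu><\<nu>. openin (space (X \<mu>)) {x \<in> topspace (space (X \<mu>)). c \<mu> x \<in> U})) \<and>
     states Y = (\<Union>\<mu>\<in>{..<\<nu>}. c \<mu> ` states (X \<mu>)) \<and>
     paths Y = gen_paths (\<Union>\<mu>\<in>{..<\<nu>}. (\<lambda>p. c \<mu> \<circ> p) ` paths (X \<mu>))"

definition is_succ :: "'o::wellorder \<Rightarrow> 'o \<Rightarrow> bool" where
  "is_succ \<nu>' \<nu> \<longleftrightarrow> \<nu> < \<nu>' \<and> \<not> (\<exists>\<mu>. \<nu> < \<mu> \<and> \<mu> < \<nu>')"

definition is_limit :: "'o::wellorder \<Rightarrow> bool" where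
  "is_limit \<nu> \<longleftrightarrow> (\<exists>\<mu>. \<mu> < \<nu>) \<and> \<not> (\<exists>\<mu>. is_succ \<nu> \<mu>)"

definition cellular_tower :: "'o::wellorder \<Rightarrow> ('o \<Rightarrow> 'a mdspace) \<Rightarrow> bool" where
  "cellular_tower lam X \<longleftrightarrow>
     (\<exists>f :: 'o \<Rightarrow> 'o \<Rightarrow> 'a \<Rightarrow> 'a.
        (\<forall>\<nu>\<le>lam. mdspace (X \<nu>)) \<and>
        (\<forall>\<nu> \<mu>. \<nu> \<le> \<mu> \<and> \<mu> \<le> lam \<longrightarrow> mdmap (X \<nu>) (X \<mu>) (f \<nu> \<mu>)) \<and>
        (\<forall>\<nu>\<le>lam. \<forall>x\<in>topspace (space (X \<nu>)). f \<nu> \<nu> x = x) \<and>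
        (\<forall>\<nu> \<mu> \<rho>. \<nu> \<le> \<mu> \<and> \<mu> \<le> \<rho> \<and> \<rho> \<le> lam \<longrightarrow>
            (\<forall>x\<in>topspace (space (X \<nu>)). f \<mu> \<rho> (f \<nu> \<mu> x) = f \<nu> \<rho> x)) \<and>
        (\<forall>\<nu>\<le>lam. \<not> (\<exists>\<mu>. \<mu> < \<nu>) \<longrightarrow>
            X \<nu> = \<lparr> space = discrete_topology (states (X \<nu>)), states = states (X \<nu>), paths = {} \<rparr>) \<and>
        (\<forall>\<nu> \<nu>'. \<nu>' \<le> lam \<and> is_succ \<nu>' \<nu> \<longrightarrow>
            (\<exists>n a g. cell_pushout (X \<nu>) n a (X \<nu>') (f \<nu> \<nu>') g)) \<and>
        (\<forall>\<nu>\<le>lam. is_limit \<nu> \<longrightarrow> chain_colimit \<nu> X f (X \<nu>) (\<lambda>\<mu>. f \<mu> \<nu>)))"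

definition locally_injective :: "(real \<Rightarrow> 'a) \<Rightarrow> bool" where
  "locally_injective p \<longleftrightarrow>
     (\<forall>t\<in>{0..1}. \<exists>V. openin (top_of_set {0..1}) V \<and> t \<in> V \<and> inj_on p V)"

end

theory Submission
  imports Defs
begin

definition LIb :: "(real \<Rightarrow> 'a) \<Rightarrow> bool" where
 "LIb p \<longleftrightarrow> (\<forall>t\<in>{0..1}. \<exists>r>0. inj_on p {s\<in>{0..1}. \<bar>s - t\<bar> < r})"

definition DJ :: "(real \<Rightarrow> 'a) \<Rightarrow> (real \<Rightarrow> 'a) \<Rightarrow> bool" where
 "DJ p q \<longleftrightarrow> (p 1 = q 0 \<longrightarrow> (\<exists>e>0. \<forall>s\<in>{0..1}. \<forall>s'\<in>{0..1}. 1 - e < s \<longrightarrow> s' < e \<longrightarrow> p s = q s' \<longrightarrow> s = 1 \<and> s' = 0))"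

lemma LI_iff: "locally_injective p \<longleftrightarrow> LIb p"
proof
  assume L: "locally_injective p"
  show "LIb p" unfolding LIb_def
  proof
    fix t :: real assume t: "t \<in> {0..1}"
    then obtain V where V: "openin (top_of_set {0..1}) V" "t \<in> V" "inj_on p V"
      using L unfolding locally_injective_def by blast
    then obtain e where e: "e > 0" "\<forall>x'\<in>{0..1}. dist x' t < e \<longrightarrow> x' \<in> V"
      unfolding openin_euclidean_subtopology_iff by blast
    have "{s\<in>{0..1}. \<bar>s - t\<bar> < e} \<subseteq> V" using e by (auto simp: dist_real_def)
    then show "\<exists>r>0. inj_on p {s\<in>{0..1}. \<bar>s - t\<bar> < r}" using e V inj_on_subset by blast
  qed
next
  assume L: "LIb p"
  show "locally_injective p" unfolding locally_injective_def
  proof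
    fix t :: real assume t: "t \<in> {0..1}"
    then obtain r where r: "r > 0" "inj_on p {s\<in>{0..1}. \<bar>s - t\<bar> < r}" using L LIb_def by blast
    have eq: "{s\<in>{0..1}. \<bar>s - t\<bar> < r} = {0..1} \<inter> ball t r" by (auto simp: dist_real_def)
    have "openin (top_of_set {0..1}) ({0..1} \<inter> ball t r)" by auto
    then show "\<exists>V. openin (top_of_set {0..1}) V \<and> t \<in> V \<and> inj_on p V"
      using r t eq by (metis (no_types, lifting) abs_zero cancel_comm_monoid_add_class.diff_cancel mem_Collect_eq)
  qed
qed

lemma G11D:
  assumes "\<phi> \<in> G11"
  shows "continuous_on {0..1} \<phi>" "\<phi> ` {0..1} = {0..1}" "inj_on \<phi> {0..1}" "\<phi> 0 = 0" "\<phi> 1 = 1"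
proof -
  have h: "homeomorphic_map (top_of_set {0..1}) (top_of_set {0..1}) \<phi>" and m: "mono_on {0..1} \<phi>"
    using assms unfolding G11_def by auto
  have c: "continuous_map (top_of_set {0..1}) (top_of_set {0..1}) \<phi>" using h homeomorphic_imp_continuous_map by blast
  then show "continuous_on {0..1} \<phi>" by simp
  show s: "\<phi> ` {0..1} = {0..1}" using homeomorphic_imp_surjective_map[OF h] by simp
  show "inj_on \<phi> {0..1}" using homeomorphic_imp_injective_map[OF h] by simp
  obtain x where x: "x \<in> {0..1}" "\<phi> x = 0" using s by (metis atLeastAtMost_iff imageE order_refl zero_le_one)
  have "\<phi> 0 \<le> \<phi> x" using mono_onD[OF m, of 0 x] x by auto
  moreover have "\<phi> 0 \<in> {0..1}" using s by auto
  ultimately show "\<phi> 0 = 0" using x by auto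
  obtain y where y: "y \<in> {0..1}" "\<phi> y = 1" using s by (metis atLeastAtMost_iff imageE order_refl zero_le_one)
  have "\<phi> y \<le> \<phi> 1" using mono_onD[OF m, of y 1] y by auto
  moreover have "\<phi> 1 \<in> {0..1}" using s by auto
  ultimately show "\<phi> 1 = 1" using y by auto
qed

lemma ncomp_lo: "t \<le> 1/2 \<Longrightarrow> (p *N q) t = p (2 * t)" by (simp add: ncomp_def)
lemma ncomp_hi: "t > 1/2 \<Longrightarrow> (p *N q) t = q (2 * t - 1)" by (simp add: ncomp_def)

lemma gen_rep:
  assumes "p \<in> gen_paths B"
  shows "(\<exists>b\<in>B. b 1 = p 1 \<and> (\<forall>d>0. \<exists>e>0. \<forall>s\<in>{0..1}. 1 - e < s \<longrightarrow> (\<exists>u\<in>{0..1}. 1 - d < u \<and> p s = b u \<and> (u = 1 \<longrightarrow> s = 1))))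
       \<and> (\<exists>b\<in>B. b 0 = p 0 \<and> (\<forall>d>0. \<exists>e>0. \<forall>s\<in>{0..1}. s < e \<longrightarrow> (\<exists>u\<in>{0..1}. u < d \<and> p s = b u \<and> (u = 0 \<longrightarrow> s = 0))))"
  using assms
proof induction
  case (base p)
  then show ?case by blast
next
  case (reparam p \<phi>)
  note G = G11D[OF reparam(2)]
  from reparam(3) obtain b1 where b1: "b1 \<in> B" "b1 1 = p 1"
     "\<forall>d>0. \<exists>e>0. \<forall>s\<in>{0..1}. 1 - e < s \<longrightarrow> (\<exists>u\<in>{0..1}. 1 - d < u \<and> p s = b1 u \<and> (u = 1 \<longrightarrow> s = 1))" by blast
  from reparam(3) obtain b0 where b0: "b0 \<in> B" "b0 0 = p 0"
     "\<forall>d>0. \<exists>e>0. \<forall>s\<in>{0..1}. s < e \<longrightarrow> (\<exists>u\<in>{0..1}. u < d \<and> p s = b0 u \<and> (u = 0 \<longrightarrow> s = 0))" by blast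
  have "\<forall>d>0. \<exists>e>0. \<forall>s\<in>{0..1}. 1 - e < s \<longrightarrow> (\<exists>u\<in>{0..1}. 1 - d < u \<and> (p \<circ> \<phi>) s = b1 u \<and> (u = 1 \<longrightarrow> s = 1))"
  proof (intro allI impI)
    fix d :: real assume "d > 0"
    then obtain e where e: "e > 0" "\<forall>s\<in>{0..1}. 1 - e < s \<longrightarrow> (\<exists>u\<in>{0..1}. 1 - d < u \<and> p s = b1 u \<and> (u = 1 \<longrightarrow> s = 1))" using b1 by blast
    obtain e' where e': "e' > 0" "\<forall>s\<in>{0..1}. dist s 1 < e' \<longrightarrow> dist (\<phi> s) (\<phi> 1) < e"
      using G(1) e(1) unfolding continuous_on_iff by (meson atLeastAtMost_iff order_refl zero_le_one)
    show "\<exists>e>0. \<forall>s\<in>{0..1}. 1 - e < s \<longrightarrow> (\<exists>u\<in>{0..1}. 1 - d < u \<and> (p \<circ> \<phi>) s = b1 u \<and> (u = 1 \<longrightarrow> s = 1))"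
    proof (intro exI conjI ballI impI)
      show "e' > 0" by fact
      fix s :: real assume s: "s \<in> {0..1}" "1 - e' < s"
      then have "dist (\<phi> s) 1 < e" using e' G(5) by (auto simp: dist_real_def)
      moreover have ps: "\<phi> s \<in> {0..1}" using s G(2) by auto
      ultimately have "1 - e < \<phi> s" by (auto simp: dist_real_def)
      then obtain u where u: "u \<in> {0..1}" "1 - d < u" "p (\<phi> s) = b1 u" "u = 1 \<longrightarrow> \<phi> s = 1" using e ps by blast
      have "\<phi> s = 1 \<longrightarrow> s = 1" using G(3) G(5) s(1) by (metis atLeastAtMost_iff inj_on_def order_refl zero_le_one)
      then show "\<exists>u\<in>{0..1}. 1 - d < u \<and> (p \<circ> \<phi>) s = b1 u \<and> (u = 1 \<longrightarrow> s = 1)" using u by auto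
    qed
  qed
  moreover have "\<forall>d>0. \<exists>e>0. \<forall>s\<in>{0..1}. s < e \<longrightarrow> (\<exists>u\<in>{0..1}. u < d \<and> (p \<circ> \<phi>) s = b0 u \<and> (u = 0 \<longrightarrow> s = 0))"
  proof (intro allI impI)
    fix d :: real assume "d > 0"
    then obtain e where e: "e > 0" "\<forall>s\<in>{0..1}. s < e \<longrightarrow> (\<exists>u\<in>{0..1}. u < d \<and> p s = b0 u \<and> (u = 0 \<longrightarrow> s = 0))" using b0 by blast
    obtain e' where e': "e' > 0" "\<forall>s\<in>{0..1}. dist s 0 < e' \<longrightarrow> dist (\<phi> s) (\<phi> 0) < e"
      using G(1) e(1) unfolding continuous_on_iff by (meson atLeastAtMost_iff order_refl zero_le_one)
    show "\<exists>e>0. \<forall>s\<in>{0..1}. s < e \<longrightarrow> (\<exists>u\<in>{0..1}. u < d \<and> (p \<circ> \<phi>) s = b0 u \<and> (u = 0 \<longrightarrow> s = 0))"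
    proof (intro exI conjI ballI impI)
      show "e' > 0" by fact
      fix s :: real assume s: "s \<in> {0..1}" "s < e'"
      then have "dist (\<phi> s) 0 < e" using e' G(4) by (auto simp: dist_real_def)
      moreover have ps: "\<phi> s \<in> {0..1}" using s G(2) by auto
      ultimately have "\<phi> s < e" by (auto simp: dist_real_def)
      then obtain u where u: "u \<in> {0..1}" "u < d" "p (\<phi> s) = b0 u" "u = 0 \<longrightarrow> \<phi> s = 0" using e ps by blast
      have "\<phi> s = 0 \<longrightarrow> s = 0" using G(3) G(4) s(1) by (metis atLeastAtMost_iff inj_on_def order_refl zero_le_one)
      then show "\<exists>u\<in>{0..1}. u < d \<and> (p \<circ> \<phi>) s = b0 u \<and> (u = 0 \<longrightarrow> s = 0)" using u by auto
    qed
  qed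
  ultimately show ?case using b0 b1 G by auto
next
  case (concat p q)
  from concat(5) obtain b1 where b1: "b1 \<in> B" "b1 1 = q 1"
     "\<forall>d>0. \<exists>e>0. \<forall>s\<in>{0..1}. 1 - e < s \<longrightarrow> (\<exists>u\<in>{0..1}. 1 - d < u \<and> q s = b1 u \<and> (u = 1 \<longrightarrow> s = 1))" by blast
  from concat(4) obtain b0 where b0: "b0 \<in> B" "b0 0 = p 0"
     "\<forall>d>0. \<exists>e>0. \<forall>s\<in>{0..1}. s < e \<longrightarrow> (\<exists>u\<in>{0..1}. u < d \<and> p s = b0 u \<and> (u = 0 \<longrightarrow> s = 0))" by blast
  have "\<forall>d>0. \<exists>e>0. \<forall>s\<in>{0..1}. 1 - e < s \<longrightarrow> (\<exists>u\<in>{0..1}. 1 - d < u \<and> (p *N q) s = b1 u \<and> (u = 1 \<longrightarrow> s = 1))"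
  proof (intro allI impI)
    fix d :: real assume "d > 0"
    then obtain e where e: "e > 0" "\<forall>s\<in>{0..1}. 1 - e < s \<longrightarrow> (\<exists>u\<in>{0..1}. 1 - d < u \<and> q s = b1 u \<and> (u = 1 \<longrightarrow> s = 1))" using b1 by blast
    show "\<exists>e>0. \<forall>s\<in>{0..1}. 1 - e < s \<longrightarrow> (\<exists>u\<in>{0..1}. 1 - d < u \<and> (p *N q) s = b1 u \<and> (u = 1 \<longrightarrow> s = 1))"
    proof (intro exI conjI ballI impI)
      show "min (e/2) (1/2) > 0" using e by auto
      fix s :: real assume s: "s \<in> {0..1}" "1 - min (e/2) (1/2) < s"
      then have "2 * s - 1 \<in> {0..1}" "1 - e < 2 * s - 1" "s > 1/2" by auto
      then obtain u where u: "u \<in> {0..1}" "1 - d < u" "q (2 * s-1) = b1 u" "u = 1 \<longrightarrow> 2 * s-1 = 1" using e by blast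
      then show "\<exists>u\<in>{0..1}. 1 - d < u \<and> (p *N q) s = b1 u \<and> (u = 1 \<longrightarrow> s = 1)"
        using \<open>s > 1/2\<close> by (auto simp: ncomp_hi)
    qed
  qed
  moreover have "\<forall>d>0. \<exists>e>0. \<forall>s\<in>{0..1}. s < e \<longrightarrow> (\<exists>u\<in>{0..1}. u < d \<and> (p *N q) s = b0 u \<and> (u = 0 \<longrightarrow> s = 0))"
  proof (intro allI impI)
    fix d :: real assume "d > 0"
    then obtain e where e: "e > 0" "\<forall>s\<in>{0..1}. s < e \<longrightarrow> (\<exists>u\<in>{0..1}. u < d \<and> p s = b0 u \<and> (u = 0 \<longrightarrow> s = 0))" using b0 by blast
    show "\<exists>e>0. \<forall>s\<in>{0..1}. s < e \<longrightarrow> (\<exists>u\<in>{0..1}. u < d \<and> (p *N q) s = b0 u \<and> (u = 0 \<longrightarrow> s = 0))"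
    proof (intro exI conjI ballI impI)
      show "min (e/2) (1/2) > 0" using e by auto
      fix s :: real assume s: "s \<in> {0..1}" "s < min (e/2) (1/2)"
      then have "2 * s \<in> {0..1}" "2 * s < e" "s \<le> 1/2" by auto
      then obtain u where u: "u \<in> {0..1}" "u < d" "p (2 * s) = b0 u" "u = 0 \<longrightarrow> 2 * s = 0" using e by blast
      then show "\<exists>u\<in>{0..1}. u < d \<and> (p *N q) s = b0 u \<and> (u = 0 \<longrightarrow> s = 0)"
        using \<open>s \<le> 1/2\<close> by (auto simp: ncomp_lo)
    qed
  qed
  moreover have "(p *N q) 1 = q 1" "(p *N q) 0 = p 0" by (auto simp: ncomp_def)
  ultimately show ?case using b0 b1 by auto
qed

lemma gen_DJ:
  assumes B: "\<forall>b1\<in>B. \<forall>b2\<in>B. DJ b1 b2" and p: "p \<in> gen_paths B" and q: "q \<in> gen_paths B"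
  shows "DJ p q"
  unfolding DJ_def
proof
  assume pq: "p 1 = q 0"
  from gen_rep[OF p] obtain b1 where b1: "b1 \<in> B" "b1 1 = p 1"
     "\<forall>d>0. \<exists>e>0. \<forall>s\<in>{0..1}. 1 - e < s \<longrightarrow> (\<exists>u\<in>{0..1}. 1 - d < u \<and> p s = b1 u \<and> (u = 1 \<longrightarrow> s = 1))" by blast
  from gen_rep[OF q] obtain b0 where b0: "b0 \<in> B" "b0 0 = q 0"
     "\<forall>d>0. \<exists>e>0. \<forall>s\<in>{0..1}. s < e \<longrightarrow> (\<exists>u\<in>{0..1}. u < d \<and> q s = b0 u \<and> (u = 0 \<longrightarrow> s = 0))" by blast
  have "DJ b1 b0" using B b0 b1 by blast
  then obtain e0 where e0: "e0 > 0" "\<forall>s\<in>{0..1}. \<forall>s'\<in>{0..1}. 1 - e0 < s \<longrightarrow> s' < e0 \<longrightarrow> b1 s = b0 s' \<longrightarrow> s = 1 \<and> s' = 0"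
    using pq b0 b1 unfolding DJ_def by auto
  obtain e1 where e1: "e1 > 0" "\<forall>s\<in>{0..1}. 1 - e1 < s \<longrightarrow> (\<exists>u\<in>{0..1}. 1 - e0 < u \<and> p s = b1 u \<and> (u = 1 \<longrightarrow> s = 1))" using b1 e0 by blast
  obtain e2 where e2: "e2 > 0" "\<forall>s\<in>{0..1}. s < e2 \<longrightarrow> (\<exists>u\<in>{0..1}. u < e0 \<and> q s = b0 u \<and> (u = 0 \<longrightarrow> s = 0))" using b0 e0 by blast
  show "\<exists>e>0. \<forall>s\<in>{0..1}. \<forall>s'\<in>{0..1}. 1 - e < s \<longrightarrow> s' < e \<longrightarrow> p s = q s' \<longrightarrow> s = 1 \<and> s' = 0"
  proof (intro exI conjI ballI impI)
    show "min e1 e2 > 0" using e1 e2 by auto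
    fix s s' :: real assume s: "s \<in> {0..1}" "s' \<in> {0..1}" "1 - min e1 e2 < s" "s' < min e1 e2" "p s = q s'"
    have "1 - e1 < s" "s' < e2" using s by auto
    then obtain u where u: "u\<in>{0..1}" "1 - e0 < u" "p s = b1 u" "u = 1 \<longrightarrow> s = 1" using e1 s(1) by blast
    obtain u' where u': "u'\<in>{0..1}" "u' < e0" "q s' = b0 u'" "u' = 0 \<longrightarrow> s' = 0" using e2 s(2) \<open>s' < e2\<close> by blast
    have "u = 1 \<and> u' = 0" using e0 u u' s by metis
    then show "s = 1" "s' = 0" using u u' by auto
  qed
qed

lemma abs2: "\<bar>2 * x - 2 * t\<bar> = 2 * \<bar>x - t\<bar>" "\<bar>(2 * x - 1) - (2 * t - 1)\<bar> = 2 * \<bar>x - t\<bar>" for x t :: real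
proof -
  have "\<bar>2 * x - 2 * t\<bar> = \<bar>2 * (x - t)\<bar>" by simp
  then show "\<bar>2 * x - 2 * t\<bar> = 2 * \<bar>x - t\<bar>" by (simp only: abs_mult)
  have "\<bar>(2 * x - 1) - (2 * t - 1)\<bar> = \<bar>2 * (x - t)\<bar>" by simp
  then show "\<bar>(2 * x - 1) - (2 * t - 1)\<bar> = 2 * \<bar>x - t\<bar>" by (simp only: abs_mult)
qed

lemma gen_LI:
  assumes B: "\<forall>b\<in>B. LIb b" and D: "\<forall>p\<in>gen_paths B. \<forall>q\<in>gen_paths B. DJ p q" and p: "p \<in> gen_paths B"
  shows "LIb p"
  using p
proof induction
  case (base p)
  then show ?case using B by blast
next
  case (reparam p \<phi>)
  note G = G11D[OF reparam(2)]
  show ?case unfolding LIb_def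
  proof
    fix t :: real assume t: "t \<in> {0..1}"
    then have pt: "\<phi> t \<in> {0..1}" using G(2) by auto
    then obtain r where r: "r > 0" "inj_on p {s\<in>{0..1}. \<bar>s - \<phi> t\<bar> < r}" using reparam(3) LIb_def by blast
    obtain d where d: "d > 0" "\<forall>s\<in>{0..1}. dist s t < d \<longrightarrow> dist (\<phi> s) (\<phi> t) < r"
      using G(1) r(1) t unfolding continuous_on_iff by blast
    have "inj_on (p \<circ> \<phi>) {s\<in>{0..1}. \<bar>s - t\<bar> < d}"
    proof (rule inj_onI)
      fix x y assume x: "x \<in> {s\<in>{0..1}. \<bar>s - t\<bar> < d}" and y: "y \<in> {s\<in>{0..1}. \<bar>s - t\<bar> < d}" and e: "(p \<circ> \<phi>) x = (p \<circ> \<phi>) y"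
      have "\<phi> x \<in> {s\<in>{0..1}. \<bar>s - \<phi> t\<bar> < r}" "\<phi> y \<in> {s\<in>{0..1}. \<bar>s - \<phi> t\<bar> < r}"
        using x y d G(2) by (auto simp: dist_real_def)
      then have "\<phi> x = \<phi> y" using r(2) e by (auto dest: inj_onD)
      then show "x = y" using G(3) x y by (auto dest: inj_onD)
    qed
    then show "\<exists>r>0. inj_on (p \<circ> \<phi>) {s\<in>{0..1}. \<bar>s - t\<bar> < r}" using d by blast
  qed
next
  case (concat p q)
  have pL: "LIb p" and qL: "LIb q" by fact+
  show ?case unfolding LIb_def
  proof
    fix t :: real assume t: "t \<in> {0..1}"
    consider "t < 1/2" | "t > 1/2" | "t = 1/2" by linarith
    then show "\<exists>r>0. inj_on (p *N q) {s\<in>{0..1}. \<bar>s - t\<bar> < r}"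
    proof cases
      case 1
      then have "2 * t \<in> {0..1}" using t by auto
      then obtain r where r: "r > 0" "inj_on p {s\<in>{0..1}. \<bar>s - 2 * t\<bar> < r}" using pL LIb_def by blast
      have "inj_on (p *N q) {s\<in>{0..1}. \<bar>s - t\<bar> < min (r/2) (1/2 - t)}"
      proof (rule inj_onI)
        fix x y assume x: "x \<in> {s\<in>{0..1}. \<bar>s - t\<bar> < min (r/2) (1/2 - t)}" and y: "y \<in> {s\<in>{0..1}. \<bar>s - t\<bar> < min (r/2) (1/2 - t)}" and e: "(p *N q) x = (p *N q) y"
        have xy: "x < 1/2" "y < 1/2" using x y by auto
        have zz: "2 * z \<in> {s\<in>{0..1}. \<bar>s - 2 * t\<bar> < r}" if "z \<in> {s\<in>{0..1}. \<bar>s - t\<bar> < min (r/2) (1/2 - t)}" "z < 1/2" for z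
          using that by (simp only: abs2 mem_Collect_eq) auto
        have "2 * x \<in> {s\<in>{0..1}. \<bar>s - 2 * t\<bar> < r}" "2 * y \<in> {s\<in>{0..1}. \<bar>s - 2 * t\<bar> < r}" using zz x y xy by blast+
        moreover have "p (2 * x) = p (2 * y)" using e xy by (simp add: ncomp_lo)
        ultimately have "2 * x = 2 * y" using r(2) by (auto dest: inj_onD)
        then show "x = y" by simp
      qed
      moreover have "min (r/2) (1/2 - t) > 0" using r 1 by auto
      ultimately show ?thesis by blast
    next
      case 2
      then have "2 * t - 1 \<in> {0..1}" using t by auto
      then obtain r where r: "r > 0" "inj_on q {s\<in>{0..1}. \<bar>s - (2 * t - 1)\<bar> < r}" using qL LIb_def by blast
      have "inj_on (p *N q) {s\<in>{0..1}. \<bar>s - t\<bar> < min (r/2) (t - 1/2)}"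
      proof (rule inj_onI)
        fix x y assume x: "x \<in> {s\<in>{0..1}. \<bar>s - t\<bar> < min (r/2) (t - 1/2)}" and y: "y \<in> {s\<in>{0..1}. \<bar>s - t\<bar> < min (r/2) (t - 1/2)}" and e: "(p *N q) x = (p *N q) y"
        have xy: "x > 1/2" "y > 1/2" using x y by auto
        have zz: "2 * z - 1 \<in> {s\<in>{0..1}. \<bar>s - (2 * t - 1)\<bar> < r}" if "z \<in> {s\<in>{0..1}. \<bar>s - t\<bar> < min (r/2) (t - 1/2)}" "z > 1/2" for z
          using that by (simp only: abs2 mem_Collect_eq) auto
        have "2 * x - 1 \<in> {s\<in>{0..1}. \<bar>s - (2 * t - 1)\<bar> < r}" "2 * y - 1 \<in> {s\<in>{0..1}. \<bar>s - (2 * t - 1)\<bar> < r}" using zz x y xy by blast+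
        moreover have "q (2 * x - 1) = q (2 * y - 1)" using e xy by (simp add: ncomp_hi)
        ultimately have "2 * x - 1 = 2 * y - 1" using r(2) by (auto dest: inj_onD)
        then show "x = y" by simp
      qed
      moreover have "min (r/2) (t - 1/2) > 0" using r 2 by auto
      ultimately show ?thesis by blast
    next
      case 3
      have "(1::real) \<in> {0..1}" "(0::real) \<in> {0..1}" by auto
      then obtain r1 r2 where r1: "r1 > 0" "inj_on p {s\<in>{0..1}. \<bar>s - 1\<bar> < r1}"
        and r2: "r2 > 0" "inj_on q {s\<in>{0..1}. \<bar>s - 0\<bar> < r2}" using pL qL unfolding LIb_def by blast
      have "DJ p q" using D concat(1,2) by blast
      then obtain e where e: "e > 0" "\<forall>s\<in>{0..1}. \<forall>s'\<in>{0..1}. 1 - e < s \<longrightarrow> s' < e \<longrightarrow> p s = q s' \<longrightarrow> s = 1 \<and> s' = 0"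
        using concat(3) unfolding DJ_def by blast
      define \<rho> where "\<rho> = min (min r1 r2) e / 2"
      have \<rho>: "\<rho> > 0" "2 * \<rho> \<le> r1" "2 * \<rho> \<le> r2" "2 * \<rho> \<le> e" using r1 r2 e by (auto simp: \<rho>_def)
      have "inj_on (p *N q) {s\<in>{0..1}. \<bar>s - t\<bar> < \<rho>}"
      proof (rule inj_onI)
        fix x y assume x: "x \<in> {s\<in>{0..1}. \<bar>s - t\<bar> < \<rho>}" and y: "y \<in> {s\<in>{0..1}. \<bar>s - t\<bar> < \<rho>}" and ee: "(p *N q) x = (p *N q) y"
        have lo: "2 * z \<in> {s\<in>{0..1}. \<bar>s - 1\<bar> < r1} \<and> 1 - e < 2 * z \<and> (p *N q) z = p (2 * z)"
          if "z \<in> {s\<in>{0..1}. \<bar>s - t\<bar> < \<rho>}" "z \<le> 1/2" for z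
        proof -
          have z: "0 \<le> z" "\<bar>z - 1/2\<bar> < \<rho>" using that 3 by auto
          have "\<bar>2 * z - 1\<bar> = 2 * \<bar>z - 1/2\<bar>" using abs2(1)[of z "1/2"] by simp
          then have a: "\<bar>2 * z - 1\<bar> < 2 * \<rho>" using z by linarith
          then have b: "1 - 2 * \<rho> < 2 * z" by (simp add: abs_less_iff)
          have c: "\<bar>2 * z - 1\<bar> < r1" using a \<rho> by linarith
          have "2 * z \<in> {s\<in>{0..1}. \<bar>s - 1\<bar> < r1}" using c z that(2) by simp
          moreover have "1 - e < 2 * z" using b \<rho> by linarith
          moreover have "(p *N q) z = p (2 * z)" using that(2) by (rule ncomp_lo)
          ultimately show ?thesis by blast
        qed
        have hi: "2 * z - 1 \<in> {s\<in>{0..1}. \<bar>s - 0\<bar> < r2} \<and> 2 * z - 1 < e \<and> (p *N q) z = q (2 * z - 1)"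
          if "z \<in> {s\<in>{0..1}. \<bar>s - t\<bar> < \<rho>}" "z > 1/2" for z
        proof -
          have z: "z \<le> 1" "\<bar>z - 1/2\<bar> < \<rho>" using that 3 by auto
          have "\<bar>2 * z - 1\<bar> = 2 * \<bar>z - 1/2\<bar>" using abs2(1)[of z "1/2"] by simp
          then have a: "\<bar>2 * z - 1\<bar> < 2 * \<rho>" using z by linarith
          then have b: "2 * z - 1 < 2 * \<rho>" by (simp add: abs_less_iff)
          have c: "\<bar>2 * z - 1 - 0\<bar> < r2" using a \<rho> by simp
          have "2 * z - 1 \<in> {s\<in>{0..1}. \<bar>s - 0\<bar> < r2}" using c z that(2) by simp
          moreover have "2 * z - 1 < e" using b \<rho> by linarith
          moreover have "(p *N q) z = q (2 * z - 1)" using that(2) by (rule ncomp_hi)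
          ultimately show ?thesis by blast
        qed
        consider "x \<le> 1/2" "y \<le> 1/2" | "x > 1/2" "y > 1/2" | "x \<le> 1/2" "y > 1/2" | "x > 1/2" "y \<le> 1/2" by linarith
        then show "x = y"
        proof cases
          case 1
          have "p (2 * x) = p (2 * y)" using lo[OF x 1(1)] lo[OF y 1(2)] ee by simp
          then have "2 * x = 2 * y" using inj_onD[OF r1(2)] lo[OF x 1(1)] lo[OF y 1(2)] by blast
          then show ?thesis by simp
        next
          case 2
          have "q (2 * x - 1) = q (2 * y - 1)" using hi[OF x 2(1)] hi[OF y 2(2)] ee by simp
          then have "2 * x - 1 = 2 * y - 1" using inj_onD[OF r2(2)] hi[OF x 2(1)] hi[OF y 2(2)] by blast
          then show ?thesis by simp
        next
          case 3
          have "p (2 * x) = q (2 * y - 1)" using lo[OF x 3(1)] hi[OF y 3(2)] ee by simp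
          then have "2 * y - 1 = 0" using e(2) lo[OF x 3(1)] hi[OF y 3(2)] by blast
          then show ?thesis using 3 by simp
        next
          case 4
          have "p (2 * y) = q (2 * x - 1)" using lo[OF y 4(2)] hi[OF x 4(1)] ee by simp
          then have "2 * x - 1 = 0" using e(2) lo[OF y 4(2)] hi[OF x 4(1)] by blast
          then show ?thesis using 4 by simp
        qed
      qed
      then show ?thesis using \<rho> by blast
    qed
  qed
qed

lemma LI_comp:
  assumes "LIb p" "p ` {0..1} \<subseteq> T" "inj_on h T"
  shows "LIb (h \<circ> p)"
  unfolding LIb_def
proof
  fix t :: real assume "t \<in> {0..1}"
  then obtain r where r: "r > 0" "inj_on p {s\<in>{0..1}. \<bar>s - t\<bar> < r}" using assms(1) LIb_def by blast
  have "p ` {s\<in>{0..1}. \<bar>s - t\<bar> < r} \<subseteq> T" using assms(2) by auto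
  then have "inj_on h (p ` {s\<in>{0..1}. \<bar>s - t\<bar> < r})" using inj_on_subset[OF assms(3)] by blast
  then have "inj_on (h \<circ> p) {s\<in>{0..1}. \<bar>s - t\<bar> < r}" using r(2) comp_inj_on by blast
  then show "\<exists>r>0. inj_on (h \<circ> p) {s\<in>{0..1}. \<bar>s - t\<bar> < r}" using r(1) by blast
qed

lemma DJ_comp:
  assumes "DJ p q" "p ` {0..1} \<subseteq> T" "q ` {0..1} \<subseteq> T" "inj_on h T"
  shows "DJ (h \<circ> p) (h \<circ> q)"
  unfolding DJ_def
proof
  assume "(h \<circ> p) 1 = (h \<circ> q) 0"
  moreover have "p 1 \<in> T" "q 0 \<in> T" using assms(2,3) by auto
  ultimately have "p 1 = q 0" using assms(4) by (auto dest: inj_onD)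
  then obtain e where e: "e > 0" "\<forall>s\<in>{0..1}. \<forall>s'\<in>{0..1}. 1 - e < s \<longrightarrow> s' < e \<longrightarrow> p s = q s' \<longrightarrow> s = 1 \<and> s' = 0"
    using assms(1) unfolding DJ_def by blast
  show "\<exists>e>0. \<forall>s\<in>{0..1}. \<forall>s'\<in>{0..1}. 1 - e < s \<longrightarrow> s' < e \<longrightarrow> (h \<circ> p) s = (h \<circ> q) s' \<longrightarrow> s = 1 \<and> s' = 0"
  proof (intro exI conjI ballI impI)
    show "e > 0" by fact
    fix s s' :: real assume s: "s \<in> {0..1}" "s' \<in> {0..1}" "1 - e < s" "s' < e" "(h \<circ> p) s = (h \<circ> q) s'"
    have "p s \<in> T" "q s' \<in> T" using assms(2,3) s by auto
    then have "p s = q s'" using s(5) assms(4) by (auto dest: inj_onD)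
    then show "s = 1" "s' = 0" using e(2) s(1,2,3,4) by blast+
  qed
qed

lemma LI_cong: "(\<And>t. t \<in> {0..1} \<Longrightarrow> p t = p' t) \<Longrightarrow> LIb p = LIb p'"
proof -
  assume a: "\<And>t. t \<in> {0..1} \<Longrightarrow> p t = p' t"
  have "inj_on p {s\<in>{0..1}. \<bar>s - t\<bar> < r} = inj_on p' {s\<in>{0..1}. \<bar>s - t\<bar> < r}" for t r
    by (rule inj_on_cong) (use a in auto)
  then show ?thesis unfolding LIb_def by simp
qed

lemma DJ_cong: "(\<And>t. t \<in> {0..1} \<Longrightarrow> p t = p' t) \<Longrightarrow> (\<And>t. t \<in> {0..1} \<Longrightarrow> q t = q' t) \<Longrightarrow> DJ p q = DJ p' q'"
proof -
  assume a: "\<And>t. t \<in> {0..1} \<Longrightarrow> p t = p' t" and b: "\<And>t. t \<in> {0..1} \<Longrightarrow> q t = q' t"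
  have "p 1 = p' 1" "q 0 = q' 0" using a b by auto
  moreover have "(\<forall>s\<in>{0..1}. \<forall>s'\<in>{0..1}. 1 - e < s \<longrightarrow> s' < e \<longrightarrow> p s = q s' \<longrightarrow> s = 1 \<and> s' = 0) =
     (\<forall>s\<in>{0..1}. \<forall>s'\<in>{0..1}. 1 - e < s \<longrightarrow> s' < e \<longrightarrow> p' s = q' s' \<longrightarrow> s = 1 \<and> s' = 0)" for e
    using a b by auto
  ultimately show ?thesis unfolding DJ_def by simp
qed

definition Cpath :: "'a set \<Rightarrow> ('a \<Rightarrow> real) \<Rightarrow> (real \<Rightarrow> 'a) \<Rightarrow> bool" where
  "Cpath A \<kappa> r \<longleftrightarrow> (\<exists>\<phi>. continuous_on {0..1} \<phi> \<and> \<phi> 0 = 0 \<and> \<phi> 1 = 1 \<and> inj_on \<phi> {0..1} \<and>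
      (\<forall>t\<in>{0<..<1}. r t \<notin> A \<and> \<kappa> (r t) = \<phi> t) \<and> r 0 \<in> A \<and> r 1 \<in> A)"

lemma C_LI: assumes "Cpath A \<kappa> r" shows "LIb r"
  unfolding LIb_def
proof
  fix t :: real assume t: "t \<in> {0..1}"
  obtain \<phi> where \<phi>: "inj_on \<phi> {0..1}" "\<forall>t\<in>{0<..<1}. r t \<notin> A \<and> \<kappa> (r t) = \<phi> t" "r 0 \<in> A" "r 1 \<in> A"
    using assms Cpath_def by blast
  have "inj_on r {s\<in>{0..1}. \<bar>s - t\<bar> < 1/2}"
  proof (rule inj_onI)
    fix x y assume x: "x \<in> {s\<in>{0..1}. \<bar>s - t\<bar> < 1/2}" and y: "y \<in> {s\<in>{0..1}. \<bar>s - t\<bar> < 1/2}" and e: "r x = r y"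
    have n: "\<not> (x = 0 \<and> y = 1)" "\<not> (x = 1 \<and> y = 0)" using x y by auto
    consider "x \<in> {0<..<1}" "y \<in> {0<..<1}" | "x \<in> {0<..<1}" "y \<notin> {0<..<1}" | "x \<notin> {0<..<1}" "y \<in> {0<..<1}" | "x \<notin> {0<..<1}" "y \<notin> {0<..<1}" by blast
    then show "x = y"
    proof cases
      case 1
      have "\<phi> x = \<kappa> (r x)" "\<phi> y = \<kappa> (r y)" using \<phi>(2) 1 by auto
      then have "\<phi> x = \<phi> y" using e by simp
      then show ?thesis using \<phi>(1) 1 by (auto dest: inj_onD)
    next
      case 2
      then have "y = 0 \<or> y = 1" using y by auto
      then have "r y \<in> A" using \<phi> by auto
      moreover have "r x \<notin> A" using \<phi>(2) 2(1) by blast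
      ultimately show ?thesis using e by simp
    next
      case 3
      then have "x = 0 \<or> x = 1" using x by auto
      then have "r x \<in> A" using \<phi> by auto
      moreover have "r y \<notin> A" using \<phi>(2) 3(2) by blast
      ultimately show ?thesis using e by simp
    next
      case 4
      then have "x = 0 \<or> x = 1" "y = 0 \<or> y = 1" using x y by auto
      then show ?thesis using n by auto
    qed
  qed
  then show "\<exists>r'>0. inj_on r {s\<in>{0..1}. \<bar>s - t\<bar> < r'}" by (intro exI[of _ "1/2"]) auto
qed

lemma C_DJ: assumes "Cpath A \<kappa> r1" "Cpath A \<kappa> r2" shows "DJ r1 r2"
  unfolding DJ_def
proof
  assume "r1 1 = r2 0"
  obtain \<phi>1 where \<phi>1: "continuous_on {0..1} \<phi>1" "\<phi>1 1 = 1" "\<forall>t\<in>{0<..<1}. r1 t \<notin> A \<and> \<kappa> (r1 t) = \<phi>1 t" "r1 0 \<in> A" "r1 1 \<in> A"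
    using assms(1) Cpath_def by blast
  obtain \<phi>2 where \<phi>2: "continuous_on {0..1} \<phi>2" "\<phi>2 0 = 0" "\<forall>t\<in>{0<..<1}. r2 t \<notin> A \<and> \<kappa> (r2 t) = \<phi>2 t" "r2 0 \<in> A" "r2 1 \<in> A"
    using assms(2) Cpath_def by blast
  obtain d1 where d1: "d1 > 0" "\<forall>s\<in>{0..1}. dist s 1 < d1 \<longrightarrow> dist (\<phi>1 s) (\<phi>1 1) < 1/2"
  proof -
    have "(1::real) \<in> {0..1}" "(1/2::real) > 0" by auto
    then show ?thesis using that \<phi>1(1) unfolding continuous_on_iff by blast
  qed
  obtain d2 where d2: "d2 > 0" "\<forall>s\<in>{0..1}. dist s 0 < d2 \<longrightarrow> dist (\<phi>2 s) (\<phi>2 0) < 1/2"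
  proof -
    have "(0::real) \<in> {0..1}" "(1/2::real) > 0" by auto
    then show ?thesis using that \<phi>2(1) unfolding continuous_on_iff by blast
  qed
  show "\<exists>e>0. \<forall>s\<in>{0..1}. \<forall>s'\<in>{0..1}. 1 - e < s \<longrightarrow> s' < e \<longrightarrow> r1 s = r2 s' \<longrightarrow> s = 1 \<and> s' = 0"
  proof (intro exI conjI ballI impI)
    show "min (1/2) (min d1 d2) > 0" using d1 d2 by auto
    fix s s' :: real assume s: "s \<in> {0..1}" "s' \<in> {0..1}" "1 - min (1/2) (min d1 d2) < s" "s' < min (1/2) (min d1 d2)" "r1 s = r2 s'"
    have "s = 1 \<and> s' = 0"
    proof (cases "s = 1")
      case True
      then have "r2 s' \<in> A" using s(5) \<phi>1 by auto
      then have "s' \<notin> {0<..<1}" using \<phi>2 by auto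
      then show ?thesis using True s by auto
    next
      case False
      then have sI: "s \<in> {0<..<1}" using s by auto
      then have "r1 s \<notin> A" using \<phi>1 by auto
      then have "s' \<noteq> 0" using s(5) \<phi>2(4) by auto
      then have sI': "s' \<in> {0<..<1}" using s by auto
      have "\<phi>1 s = \<kappa> (r1 s)" "\<phi>2 s' = \<kappa> (r2 s')" using \<phi>1(3) \<phi>2(3) sI sI' by auto
      then have eq: "\<phi>1 s = \<phi>2 s'" using s(5) by simp
      have "dist s 1 < d1" "dist s' 0 < d2" using s by (auto simp: dist_real_def)
      then have "dist (\<phi>1 s) (\<phi>1 1) < 1/2" "dist (\<phi>2 s') (\<phi>2 0) < 1/2" using d1(2) d2(2) s(1,2) by blast+
      then have "\<bar>\<phi>1 s - 1\<bar> < 1/2" "\<bar>\<phi>2 s'\<bar> < 1/2" using \<phi>1(2) \<phi>2(2) by (simp_all add: dist_real_def)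
      then show ?thesis using eq by (simp add: abs_less_iff)
    qed
    then show "s = 1" "s' = 0" by auto
  qed
qed

lemma FC_DJ: assumes "r1 ` {0..1} \<subseteq> A" "LIb r1" "Cpath A \<kappa> r2" shows "DJ r1 r2"
  unfolding DJ_def
proof
  assume e: "r1 1 = r2 0"
  obtain \<phi>2 where \<phi>2: "\<forall>t\<in>{0<..<1}. r2 t \<notin> A \<and> \<kappa> (r2 t) = \<phi>2 t"
    using assms(3) Cpath_def by blast
  have "(1::real) \<in> {0..1}" by auto
  then obtain \<rho> where \<rho>: "\<rho> > 0" "inj_on r1 {s\<in>{0..1}. \<bar>s - 1\<bar> < \<rho>}" using assms(2) unfolding LIb_def by blast
  show "\<exists>e>0. \<forall>s\<in>{0..1}. \<forall>s'\<in>{0..1}. 1 - e < s \<longrightarrow> s' < e \<longrightarrow> r1 s = r2 s' \<longrightarrow> s = 1 \<and> s' = 0"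
  proof (intro exI conjI ballI impI)
    show "min (1/2) \<rho> > 0" using \<rho> by auto
    fix s s' :: real assume s: "s \<in> {0..1}" "s' \<in> {0..1}" "1 - min (1/2) \<rho> < s" "s' < min (1/2) \<rho>" "r1 s = r2 s'"
    have "r1 s \<in> A" using s(1) assms(1) by blast
    then have "r2 s' \<in> A" using s(5) by simp
    then have "s' \<notin> {0<..<1}" using \<phi>2 by auto
    then have s0: "s' = 0" using s by auto
    then have "r1 s = r1 1" using s e by simp
    moreover have "s \<in> {s\<in>{0..1}. \<bar>s - 1\<bar> < \<rho>}" "1 \<in> {s\<in>{0..1}. \<bar>s - 1\<bar> < \<rho>}" using s \<rho> by auto
    ultimately have "s = 1" using inj_onD[OF \<rho>(2)] by blast
    then show "s = 1" "s' = 0" using s0 by auto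
  qed
qed

lemma CF_DJ: assumes "Cpath A \<kappa> r1" "r2 ` {0..1} \<subseteq> A" "LIb r2" shows "DJ r1 r2"
  unfolding DJ_def
proof
  assume e: "r1 1 = r2 0"
  obtain \<phi>1 where \<phi>1: "\<forall>t\<in>{0<..<1}. r1 t \<notin> A \<and> \<kappa> (r1 t) = \<phi>1 t"
    using assms(1) Cpath_def by blast
  have "(0::real) \<in> {0..1}" by auto
  then obtain \<rho> where \<rho>: "\<rho> > 0" "inj_on r2 {s\<in>{0..1}. \<bar>s - 0\<bar> < \<rho>}" using assms(3) unfolding LIb_def by blast
  show "\<exists>e>0. \<forall>s\<in>{0..1}. \<forall>s'\<in>{0..1}. 1 - e < s \<longrightarrow> s' < e \<longrightarrow> r1 s = r2 s' \<longrightarrow> s = 1 \<and> s' = 0"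
  proof (intro exI conjI ballI impI)
    show "min (1/2) \<rho> > 0" using \<rho> by auto
    fix s s' :: real assume s: "s \<in> {0..1}" "s' \<in> {0..1}" "1 - min (1/2) \<rho> < s" "s' < min (1/2) \<rho>" "r1 s = r2 s'"
    have "r2 s' \<in> A" using s(2) assms(2) by blast
    then have "r1 s \<in> A" using s(5) by simp
    then have "s \<notin> {0<..<1}" using \<phi>1 by auto
    then have s1: "s = 1" using s by auto
    then have "r2 s' = r2 0" using s e by simp
    moreover have "s' \<in> {s\<in>{0..1}. \<bar>s - 0\<bar> < \<rho>}" "0 \<in> {s\<in>{0..1}. \<bar>s - 0\<bar> < \<rho>}" using s \<rho> by auto
    ultimately have "s' = 0" using inj_onD[OF \<rho>(2)] by blast
    then show "s = 1" "s' = 0" using s1 by auto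
  qed
qed



lemma glob_q_carrier: "z \<in> topspace Z \<Longrightarrow> t \<in> {0..1} \<Longrightarrow> glob_q z t \<in> glob_carrier Z"
  by (auto simp: glob_q_def glob_carrier_def)

lemma glob_topspace: "topspace (glob_topology Z) = glob_carrier Z"
proof -
  define pre where "pre U = {(z, t). z \<in> topspace Z \<and> t \<in> {0..1} \<and> glob_q z t \<in> U}" for U
  define P where "P U = (U \<subseteq> glob_carrier Z \<and> openin (prod_topology Z (top_of_set {0..1})) (pre U))" for U
  have gt: "glob_topology Z = topology P" unfolding glob_topology_def P_def pre_def by simp
  have "istopology P" unfolding istopology_def
  proof (intro conjI allI impI ballI)
    fix S T assume "P S" "P T"
    moreover have "pre (S \<inter> T) = pre S \<inter> pre T" unfolding pre_def by auto
    ultimately show "P (S \<inter> T)" unfolding P_def by auto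
  next
    fix K assume K: "\<forall>K\<in>K. P K"
    have "pre (\<Union>K) = \<Union> (pre ` K)" unfolding pre_def by auto
    moreover have "openin (prod_topology Z (top_of_set {0..1})) (\<Union> (pre ` K))"
      using K unfolding P_def by (intro openin_Union) auto
    moreover have "\<Union>K \<subseteq> glob_carrier Z" using K unfolding P_def by auto
    ultimately show "P (\<Union>K)" unfolding P_def by simp
  qed
  then have op: "openin (glob_topology Z) = P" using gt by simp
  have e: "pre (glob_carrier Z) = topspace (prod_topology Z (top_of_set {0..1}))"
    unfolding pre_def using glob_q_carrier by auto
  have "openin (prod_topology Z (top_of_set {0..1})) (pre (glob_carrier Z))"
    unfolding e by (rule openin_topspace)
  then have "P (glob_carrier Z)" unfolding P_def by simp
  moreover have "\<And>U. P U \<Longrightarrow> U \<subseteq> glob_carrier Z" unfolding P_def by simp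
  ultimately show ?thesis unfolding topspace_def op by blast
qed

definition gm_t :: "gpt \<Rightarrow> real" where
  "gm_t b = (case b of GM z t \<Rightarrow> t | _ \<Rightarrow> 0)"

lemma inj_id_on: "(\<forall>x\<in>A. g x = x) \<Longrightarrow> inj_on g A"
  by (simp add: inj_on_def)

lemma path_img:
  assumes "mdspace X" "p \<in> paths X" shows "p ` {0..1} \<subseteq> topspace (space X)"
proof -
  have "continuous_map (top_of_set {0..1}) (space X) p" using assms unfolding mdspace_def by blast
  then show ?thesis using continuous_map_image_subset_topspace by fastforce
qed

lemma pushout_step:
  assumes po: "cell_pushout X n a Y h g" and mX: "mdspace X"
    and LX: "\<forall>p\<in>paths X. LIb p" and DX: "\<forall>p\<in>paths X. \<forall>q\<in>paths X. DJ p q"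
  shows "inj_on h (topspace (space X)) \<and> (\<forall>p\<in>paths Y. LIb p) \<and> (\<forall>p\<in>paths Y. \<forall>q\<in>paths Y. DJ p q)"
proof -
  define S where "S = Glob (sphere_m1 n)"
  define D where "D = Glob (disk n)"
  define XS where "XS = topspace (space X)"
  define DS where "DS = topspace (space D)"
  define SS where "SS = topspace (space S)"
  define B where "B = (\<lambda>p. h \<circ> p) ` paths X \<union> (\<lambda>p. g \<circ> p) ` paths D"
  have P: "mdmap S X a \<and> mdmap X Y h \<and> mdmap D Y g \<and>
     (\<forall>b\<in>SS. g b = h (a b)) \<and>
     topspace (space Y) = h ` XS \<union> g ` DS \<and>
     inj_on h XS \<and> inj_on g (DS - SS) \<and> h ` XS \<inter> g ` (DS - SS) = {} \<and>
     (\<forall>U. openin (space Y) U \<longleftrightarrow>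
            U \<subseteq> topspace (space Y) \<and>
            openin (space X) {x \<in> XS. h x \<in> U} \<and>
            openin (space D) {b \<in> DS. g b \<in> U}) \<and>
     states Y = h ` states X \<union> g ` states D \<and>
     paths Y = gen_paths B"
    using po unfolding cell_pushout_def Let_def S_def D_def XS_def DS_def SS_def B_def .
  have aS: "mdmap S X a" using P by (rule conjunct1)
  have gb: "\<forall>b\<in>SS. g b = h (a b)" using P[THEN conjunct2, THEN conjunct2, THEN conjunct2] by (rule conjunct1)
  have injh: "inj_on h XS" using P[THEN conjunct2, THEN conjunct2, THEN conjunct2, THEN conjunct2, THEN conjunct2] by (rule conjunct1)
  have injg: "inj_on g (DS - SS)" using P[THEN conjunct2, THEN conjunct2, THEN conjunct2, THEN conjunct2, THEN conjunct2, THEN conjunct2] by (rule conjunct1)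
  have disj: "h ` XS \<inter> g ` (DS - SS) = {}" using P[THEN conjunct2, THEN conjunct2, THEN conjunct2, THEN conjunct2, THEN conjunct2, THEN conjunct2, THEN conjunct2] by (rule conjunct1)
  have PY: "paths Y = gen_paths B" using P[THEN conjunct2, THEN conjunct2, THEN conjunct2, THEN conjunct2, THEN conjunct2, THEN conjunct2, THEN conjunct2, THEN conjunct2, THEN conjunct2, THEN conjunct2] .
  define A where "A = h ` XS"
  define \<kappa> where "\<kappa> x = gm_t (inv_into (DS - SS) g x)" for x
  have SSc: "SS = glob_carrier (sphere_m1 n)" unfolding SS_def S_def Glob_def by (simp add: glob_topspace)
  have DSc: "DS = glob_carrier (disk n)" unfolding DS_def D_def Glob_def by (simp add: glob_topspace)
  have aXS: "a ` SS \<subseteq> XS"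
    using aS unfolding mdmap_def SS_def XS_def using continuous_map_image_subset_topspace by blast
  have G0S: "G0 \<in> SS" "G1 \<in> SS" unfolding SSc glob_carrier_def by auto
  have pimg: "p ` {0..1} \<subseteq> XS" if "p \<in> paths X" for p using path_img[OF mX that] XS_def by simp
  define Fp where "Fp r \<longleftrightarrow> (\<exists>p\<in>paths X. \<forall>t\<in>{0..1}. r t = h (p t))" for r :: "real \<Rightarrow> 'a"
  have cls: "Fp r \<or> Cpath A \<kappa> r" if rB: "r \<in> B" for r
  proof -
    consider (F) p where "p \<in> paths X" "r = h \<circ> p" | (G) p where "p \<in> paths D" "r = g \<circ> p"
      using rB unfolding B_def by blast
    then show ?thesis
    proof cases
      case F
      then show ?thesis unfolding Fp_def by auto
    next
      case G
      have "p \<in> {(\<lambda>t. glob_q z (\<phi> t)) | z \<phi>. z \<in> topspace (disk n) \<and> \<phi> \<in> G11}"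
        using G(1) unfolding D_def Glob_def by simp
      then obtain z \<phi> where z: "z \<in> topspace (disk n)" "\<phi> \<in> G11" and pz: "p = (\<lambda>t. glob_q z (\<phi> t))"
        by blast
      have r: "r = g \<circ> (\<lambda>t. glob_q z (\<phi> t))" using G(2) pz by simp
      note GG = G11D[OF z(2)]
      show ?thesis
      proof (cases "z \<in> topspace (sphere_m1 n)")
        case True
        have "(\<lambda>t. glob_q z (\<phi> t)) \<in> paths S" unfolding S_def Glob_def using True z(2) by auto
        then have pX: "a \<circ> (\<lambda>t. glob_q z (\<phi> t)) \<in> paths X" using aS unfolding mdmap_def by blast
        have "\<forall>t\<in>{0..1}. r t = h ((a \<circ> (\<lambda>t. glob_q z (\<phi> t))) t)"
        proof
          fix t :: real assume "t \<in> {0..1}"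
          then have "\<phi> t \<in> {0..1}" using GG(2) by auto
          then have "glob_q z (\<phi> t) \<in> SS" unfolding SSc using True glob_q_carrier by blast
          then show "r t = h ((a \<circ> (\<lambda>t. glob_q z (\<phi> t))) t)" using gb r by simp
        qed
        then show ?thesis unfolding Fp_def using pX by blast
      next
        case False
        have int: "\<phi> t \<in> {0<..<1}" if "t \<in> {0<..<1}" for t
        proof -
          have t: "t \<in> {0..1}" using that by auto
          then have "\<phi> t \<in> {0..1}" using GG(2) by auto
          moreover have "\<phi> t \<noteq> 0"
          proof
            assume "\<phi> t = 0"
            then have "\<phi> t = \<phi> 0" using GG(4) by simp
            then have "t = 0" using inj_onD[OF GG(3)] t by simp
            then show False using that by simp
          qed
          moreover have "\<phi> t \<noteq> 1"
          proof
            assume "\<phi> t = 1"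
            then have "\<phi> t = \<phi> 1" using GG(5) by simp
            then have "t = 1" using inj_onD[OF GG(3)] t by simp
            then show False using that by simp
          qed
          ultimately show ?thesis by auto
        qed
        have inn: "GM z (\<phi> t) \<in> DS - SS \<and> r t = g (GM z (\<phi> t))" if "t \<in> {0<..<1}" for t
        proof -
          have i: "\<phi> t \<in> {0<..<1}" using int that by blast
          then have "GM z (\<phi> t) \<in> DS" unfolding DSc glob_carrier_def using z(1) by auto
          moreover have "GM z (\<phi> t) \<notin> SS" unfolding SSc glob_carrier_def using False by auto
          moreover have "glob_q z (\<phi> t) = GM z (\<phi> t)" using i by (auto simp: glob_q_def)
          ultimately show ?thesis using r by simp
        qed
        have rint: "\<forall>t\<in>{0<..<1}. r t \<notin> A \<and> \<kappa> (r t) = \<phi> t"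
        proof
          fix t :: real assume t: "t \<in> {0<..<1}"
          have "r t \<notin> A" using inn[OF t] disj unfolding A_def by blast
          moreover have "\<kappa> (r t) = \<phi> t" using inn[OF t] injg unfolding \<kappa>_def by (simp add: gm_t_def)
          ultimately show "r t \<notin> A \<and> \<kappa> (r t) = \<phi> t" by blast
        qed
        have "r 0 = g G0" "r 1 = g G1" using r GG(4,5) by (simp_all add: glob_q_def)
        moreover have "g G0 = h (a G0)" "g G1 = h (a G1)" using gb G0S by simp_all
        moreover have "a G0 \<in> XS" "a G1 \<in> XS" using aXS G0S by blast+
        ultimately have "r 0 \<in> A" "r 1 \<in> A" unfolding A_def by simp_all
        then have "Cpath A \<kappa> r" unfolding Cpath_def using GG(1,3,4,5) rint by (intro exI[of _ \<phi>]) simp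
        then show ?thesis by blast
      qed
    qed
  qed
  have Fimg: "r ` {0..1} \<subseteq> A \<and> LIb r" if F: "Fp r" for r
  proof -
    obtain p where p: "p \<in> paths X" "\<forall>t\<in>{0..1}. r t = h (p t)" using F unfolding Fp_def by blast
    have i: "r ` {0..1} \<subseteq> A"
    proof
      fix y assume "y \<in> r ` {0..1}"
      then obtain t where t: "t \<in> {0..1}" "y = r t" by blast
      then have "p t \<in> XS" using pimg[OF p(1)] by blast
      then show "y \<in> A" using t p(2) unfolding A_def by simp
    qed
    have l1: "LIb (h \<circ> p)" using LI_comp[OF _ pimg[OF p(1)] injh] LX p(1) by blast
    have l2: "LIb r = LIb (h \<circ> p)" by (rule LI_cong) (use p(2) in simp)
    show ?thesis using i l1 l2 by simp
  qed
  have LB: "\<forall>b\<in>B. LIb b"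
  proof
    fix b assume "b \<in> B"
    from cls[OF this] show "LIb b" using Fimg C_LI by blast
  qed
  have DB: "\<forall>b1\<in>B. \<forall>b2\<in>B. DJ b1 b2"
  proof (intro ballI)
    fix r1 r2 assume r1: "r1 \<in> B" and r2: "r2 \<in> B"
    consider "Fp r1" "Fp r2" | "Fp r1" "Cpath A \<kappa> r2" | "Cpath A \<kappa> r1" "Fp r2" | "Cpath A \<kappa> r1" "Cpath A \<kappa> r2"
      using cls[OF r1] cls[OF r2] by blast
    then show "DJ r1 r2"
    proof cases
      case 1
      obtain p where p: "p \<in> paths X" "\<forall>t\<in>{0..1}. r1 t = h (p t)" using 1 Fp_def by blast
      obtain q where q: "q \<in> paths X" "\<forall>t\<in>{0..1}. r2 t = h (q t)" using 1 Fp_def by blast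
      have "DJ (h \<circ> p) (h \<circ> q)" using DJ_comp[OF _ pimg[OF p(1)] pimg[OF q(1)] injh] DX p(1) q(1) by blast
      then show ?thesis using DJ_cong[of r1 "h \<circ> p" r2 "h \<circ> q"] p(2) q(2) by simp
    next
      case 2
      then show ?thesis using FC_DJ[OF _ _ 2(2)] Fimg[OF 2(1)] by blast
    next
      case 3
      then show ?thesis using CF_DJ[OF 3(1)] Fimg[OF 3(2)] by blast
    next
      case 4
      then show ?thesis using C_DJ[OF 4(1) 4(2)] by blast
    qed
  qed
  have DY: "\<forall>p\<in>paths Y. \<forall>q\<in>paths Y. DJ p q" unfolding PY using gen_DJ[OF DB] by blast
  have LY: "\<forall>p\<in>paths Y. LIb p" using gen_LI[OF LB] DY unfolding PY by blast
  show ?thesis using injh LY DY XS_def by blast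
qed

lemma colimit_step:
  fixes \<nu> :: "'o::wellorder"
  assumes cc: "chain_colimit \<nu> X f Y c"
    and md: "\<forall>\<mu><\<nu>. mdspace (X \<mu>)"
    and LX: "\<forall>\<mu><\<nu>. \<forall>p\<in>paths (X \<mu>). LIb p"
    and DX: "\<forall>\<mu><\<nu>. \<forall>p\<in>paths (X \<mu>). \<forall>q\<in>paths (X \<mu>). DJ p q"
    and injf: "\<forall>\<mu> \<sigma>. \<mu> \<le> \<sigma> \<and> \<sigma> < \<nu> \<longrightarrow> inj_on (f \<mu> \<sigma>) (topspace (space (X \<mu>)))"
    and mm: "\<forall>\<mu> \<sigma>. \<mu> \<le> \<sigma> \<and> \<sigma> < \<nu> \<longrightarrow> mdmap (X \<mu>) (X \<sigma>) (f \<mu> \<sigma>)"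
    and idf: "\<forall>\<sigma><\<nu>. \<forall>x\<in>topspace (space (X \<sigma>)). f \<sigma> \<sigma> x = x"
  shows "(\<forall>\<mu><\<nu>. inj_on (c \<mu>) (topspace (space (X \<mu>)))) \<and> (\<forall>p\<in>paths Y. LIb p) \<and> (\<forall>p\<in>paths Y. \<forall>q\<in>paths Y. DJ p q)"
proof -
  define T where "T \<mu> = topspace (space (X \<mu>))" for \<mu>
  define B where "B = (\<Union>\<mu>\<in>{..<\<nu>}. (\<lambda>p. c \<mu> \<circ> p) ` paths (X \<mu>))"
  have EQ: "\<forall>\<mu><\<nu>. \<forall>\<rho><\<nu>. \<forall>x\<in>T \<mu>. \<forall>y\<in>T \<rho>.
         c \<mu> x = c \<rho> y \<longleftrightarrow> (\<exists>\<sigma>. \<mu> \<le> \<sigma> \<and> \<rho> \<le> \<sigma> \<and> \<sigma> < \<nu> \<and> f \<mu> \<sigma> x = f \<rho> \<sigma> y)"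
    using cc[unfolded chain_colimit_def, THEN conjunct2, THEN conjunct1] unfolding T_def .
  have PY: "paths Y = gen_paths B" using cc[unfolded chain_colimit_def, THEN conjunct2, THEN conjunct2, THEN conjunct2, THEN conjunct2] unfolding B_def .
  have injc: "inj_on (c \<mu>) (T \<mu>)" if mu: "\<mu> < \<nu>" for \<mu>
  proof (rule inj_onI)
    fix x y assume xy: "x \<in> T \<mu>" "y \<in> T \<mu>" "c \<mu> x = c \<mu> y"
    then obtain \<sigma> where s: "\<mu> \<le> \<sigma>" "\<sigma> < \<nu>" "f \<mu> \<sigma> x = f \<mu> \<sigma> y" using EQ[rule_format, OF mu mu xy(1) xy(2)] by blast
    have "inj_on (f \<mu> \<sigma>) (T \<mu>)" using injf s(1,2) unfolding T_def by blast
    then show "x = y" using s(3) xy(1,2) by (rule inj_onD)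
  qed
  have fT: "f \<mu> \<sigma> x \<in> T \<sigma>" if "\<mu> \<le> \<sigma>" "\<sigma> < \<nu>" "x \<in> T \<mu>" for \<mu> \<sigma> x
  proof -
    have "continuous_map (space (X \<mu>)) (space (X \<sigma>)) (f \<mu> \<sigma>)" using mm that(1,2) unfolding mdmap_def by blast
    then show ?thesis using that(3) unfolding T_def using continuous_map_image_subset_topspace by blast
  qed
  have compat: "c \<mu> x = c \<sigma> (f \<mu> \<sigma> x)" if "\<mu> \<le> \<sigma>" "\<sigma> < \<nu>" "x \<in> T \<mu>" for \<mu> \<sigma> x
  proof -
    have m: "\<mu> < \<nu>" using that by simp
    have y: "f \<mu> \<sigma> x \<in> T \<sigma>" using fT that by blast
    have "f \<sigma> \<sigma> (f \<mu> \<sigma> x) = f \<mu> \<sigma> x" using idf that(2) y unfolding T_def by blast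
    then have "\<exists>\<sigma>'. \<mu> \<le> \<sigma>' \<and> \<sigma> \<le> \<sigma>' \<and> \<sigma>' < \<nu> \<and> f \<mu> \<sigma>' x = f \<sigma> \<sigma>' (f \<mu> \<sigma> x)"
      using that by (intro exI[of _ \<sigma>]) simp
    then show ?thesis using EQ[rule_format, OF m that(2) that(3) y] by blast
  qed
  have pimg: "p ` {0..1} \<subseteq> T \<mu>" if "\<mu> < \<nu>" "p \<in> paths (X \<mu>)" for \<mu> p
    using path_img[of "X \<mu>" p] md that unfolding T_def by blast
  have LB: "\<forall>b\<in>B. LIb b"
  proof
    fix b assume "b \<in> B"
    then obtain \<mu> p where mp: "\<mu> < \<nu>" "p \<in> paths (X \<mu>)" "b = c \<mu> \<circ> p" unfolding B_def by blast
    have "LIb p" using LX mp by blast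
    then show "LIb b" using LI_comp[OF _ pimg[OF mp(1,2)] injc[OF mp(1)]] mp(3) by simp
  qed
  have DB: "\<forall>b1\<in>B. \<forall>b2\<in>B. DJ b1 b2"
  proof (intro ballI)
    fix b1 b2 assume "b1 \<in> B" "b2 \<in> B"
    then obtain \<mu> p \<rho> q where mp: "\<mu> < \<nu>" "p \<in> paths (X \<mu>)" "b1 = c \<mu> \<circ> p"
      and rq: "\<rho> < \<nu>" "q \<in> paths (X \<rho>)" "b2 = c \<rho> \<circ> q" unfolding B_def by blast
    define \<sigma> where "\<sigma> = max \<mu> \<rho>"
    have s: "\<mu> \<le> \<sigma>" "\<rho> \<le> \<sigma>" "\<sigma> < \<nu>" using mp(1) rq(1) unfolding \<sigma>_def by (auto simp: max_def)
    have p': "f \<mu> \<sigma> \<circ> p \<in> paths (X \<sigma>)" using mm s(1,3) mp(2) unfolding mdmap_def by blast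
    have q': "f \<rho> \<sigma> \<circ> q \<in> paths (X \<sigma>)" using mm s(2,3) rq(2) unfolding mdmap_def by blast
    have "DJ (f \<mu> \<sigma> \<circ> p) (f \<rho> \<sigma> \<circ> q)" using DX s(3) p' q' by blast
    then have d: "DJ (c \<sigma> \<circ> (f \<mu> \<sigma> \<circ> p)) (c \<sigma> \<circ> (f \<rho> \<sigma> \<circ> q))"
      using DJ_comp[OF _ pimg[OF s(3) p'] pimg[OF s(3) q'] injc[OF s(3)]] by blast
    have e1: "b1 t = (c \<sigma> \<circ> (f \<mu> \<sigma> \<circ> p)) t" if "t \<in> {0..1}" for t
    proof -
      have "p t \<in> T \<mu>" using pimg[OF mp(1,2)] that by blast
      then show ?thesis using compat[OF s(1,3)] mp(3) by simp
    qed
    have e2: "b2 t = (c \<sigma> \<circ> (f \<rho> \<sigma> \<circ> q)) t" if "t \<in> {0..1}" for t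
    proof -
      have "q t \<in> T \<rho>" using pimg[OF rq(1,2)] that by blast
      then show ?thesis using compat[OF s(2,3)] rq(3) by simp
    qed
    have "DJ b1 b2 = DJ (c \<sigma> \<circ> (f \<mu> \<sigma> \<circ> p)) (c \<sigma> \<circ> (f \<rho> \<sigma> \<circ> q))"
      by (rule DJ_cong) (use e1 e2 in blast)+
    then show "DJ b1 b2" using d by simp
  qed
  have DY: "\<forall>p\<in>paths Y. \<forall>q\<in>paths Y. DJ p q" unfolding PY using gen_DJ[OF DB] by blast
  have LY: "\<forall>p\<in>paths Y. LIb p" using gen_LI[OF LB] DY unfolding PY by blast
  show ?thesis using injc LY DY unfolding T_def by blast
qed

theorem proposition5p13:
  fixes lam :: "'o::wellorder" and X :: "'o \<Rightarrow> 'a mdspace" and p :: "real \<Rightarrow> 'a"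
  assumes "cellular_tower lam X"
    and "p \<in> paths (X lam)"
  shows "locally_injective p"
proof -
  obtain f :: "'o \<Rightarrow> 'o \<Rightarrow> 'a \<Rightarrow> 'a" where F:
     "(\<forall>\<nu>\<le>lam. mdspace (X \<nu>)) \<and>
        (\<forall>\<nu> \<mu>. \<nu> \<le> \<mu> \<and> \<mu> \<le> lam \<longrightarrow> mdmap (X \<nu>) (X \<mu>) (f \<nu> \<mu>)) \<and>
        (\<forall>\<nu>\<le>lam. \<forall>x\<in>topspace (space (X \<nu>)). f \<nu> \<nu> x = x) \<and>
        (\<forall>\<nu> \<mu> \<rho>. \<nu> \<le> \<mu> \<and> \<mu> \<le> \<rho> \<and> \<rho> \<le> lam \<longrightarrow>
            (\<forall>x\<in>topspace (space (X \<nu>)). f \<mu> \<rho> (f \<nu> \<mu> x) = f \<nu> \<rho> x)) \<and>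
        (\<forall>\<nu>\<le>lam. \<not> (\<exists>\<mu>. \<mu> < \<nu>) \<longrightarrow>
            X \<nu> = \<lparr> space = discrete_topology (states (X \<nu>)), states = states (X \<nu>), paths = {} \<rparr>) \<and>
        (\<forall>\<nu> \<nu>'. \<nu>' \<le> lam \<and> is_succ \<nu>' \<nu> \<longrightarrow>
            (\<exists>n a g. cell_pushout (X \<nu>) n a (X \<nu>') (f \<nu> \<nu>') g)) \<and>
        (\<forall>\<nu>\<le>lam. is_limit \<nu> \<longrightarrow> chain_colimit \<nu> X f (X \<nu>) (\<lambda>\<mu>. f \<mu> \<nu>))"
    using assms(1) unfolding cellular_tower_def by (rule exE)
  note md = F[THEN conjunct1]
  note mm = F[THEN conjunct2, THEN conjunct1]
  note idf = F[THEN conjunct2, THEN conjunct2, THEN conjunct1]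
  note cmp = F[THEN conjunct2, THEN conjunct2, THEN conjunct2, THEN conjunct1]
  note bot = F[THEN conjunct2, THEN conjunct2, THEN conjunct2, THEN conjunct2, THEN conjunct1]
  note suc = F[THEN conjunct2, THEN conjunct2, THEN conjunct2, THEN conjunct2, THEN conjunct2, THEN conjunct1]
  note lim = F[THEN conjunct2, THEN conjunct2, THEN conjunct2, THEN conjunct2, THEN conjunct2, THEN conjunct2]
  define Inv where "Inv \<nu> \<longleftrightarrow> (\<forall>\<mu>\<le>\<nu>. inj_on (f \<mu> \<nu>) (topspace (space (X \<mu>)))) \<and>
      (\<forall>p\<in>paths (X \<nu>). LIb p) \<and> (\<forall>p\<in>paths (X \<nu>). \<forall>q\<in>paths (X \<nu>). DJ p q)" for \<nu>
  have key: "\<nu> \<le> lam \<longrightarrow> Inv \<nu>" for \<nu>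
  proof (induction \<nu> rule: less_induct)
    case (less \<nu>)
    show ?case
    proof
      assume nl: "\<nu> \<le> lam"
      have IH: "Inv \<mu>" if "\<mu> < \<nu>" for \<mu> using less that nl by auto
      have idinj: "inj_on (f \<nu> \<nu>) (topspace (space (X \<nu>)))" using idf nl by (intro inj_id_on) blast
      consider (B) "\<not> (\<exists>\<mu>. \<mu> < \<nu>)" | (S) \<nu>0 where "is_succ \<nu> \<nu>0" | (L) "is_limit \<nu>"
        unfolding is_limit_def by blast
      then show "Inv \<nu>"
      proof cases
        case B
        have "X \<nu> = \<lparr> space = discrete_topology (states (X \<nu>)), states = states (X \<nu>), paths = {} \<rparr>"
          using bot nl B by blast
        then have "paths (X \<nu>) = paths \<lparr> space = discrete_topology (states (X \<nu>)), states = states (X \<nu>), paths = {} \<rparr>"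
          by (rule arg_cong)
        then have "paths (X \<nu>) = {}" by simp
        moreover have "\<forall>\<mu>\<le>\<nu>. inj_on (f \<mu> \<nu>) (topspace (space (X \<mu>)))"
        proof (intro allI impI)
          fix \<mu> assume "\<mu> \<le> \<nu>"
          then have "\<mu> = \<nu>" using B by (auto simp: le_less)
          then show "inj_on (f \<mu> \<nu>) (topspace (space (X \<mu>)))" using idinj by simp
        qed
        ultimately show ?thesis unfolding Inv_def by simp
      next
        case S
        have s0: "\<nu>0 < \<nu>" "\<not> (\<exists>\<mu>. \<nu>0 < \<mu> \<and> \<mu> < \<nu>)" using S unfolding is_succ_def by auto
        then obtain n a g where po: "cell_pushout (X \<nu>0) n a (X \<nu>) (f \<nu>0 \<nu>) g" using suc nl S by blast
        have I0: "Inv \<nu>0" using IH s0(1) by blast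
        have md0: "mdspace (X \<nu>0)" using md s0(1) nl by auto
        have R: "inj_on (f \<nu>0 \<nu>) (topspace (space (X \<nu>0))) \<and> (\<forall>p\<in>paths (X \<nu>). LIb p) \<and> (\<forall>p\<in>paths (X \<nu>). \<forall>q\<in>paths (X \<nu>). DJ p q)"
          using pushout_step[OF po md0] I0 unfolding Inv_def by blast
        have "inj_on (f \<mu> \<nu>) (topspace (space (X \<mu>)))" if mu: "\<mu> \<le> \<nu>" for \<mu>
        proof (cases "\<mu> = \<nu>")
          case True then show ?thesis using idinj by simp
        next
          case False
          then have "\<mu> < \<nu>" using mu by (simp add: le_less)
          then have "\<not> \<nu>0 < \<mu>" using s0(2) by blast
          then have m0: "\<mu> \<le> \<nu>0" by (simp add: not_less)
          have n0: "\<nu>0 \<le> lam" using s0(1) nl by simp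
          have i1: "inj_on (f \<mu> \<nu>0) (topspace (space (X \<mu>)))" using I0 m0 unfolding Inv_def by blast
          have cm: "continuous_map (space (X \<mu>)) (space (X \<nu>0)) (f \<mu> \<nu>0)"
            using mm m0 n0 unfolding mdmap_def by blast
          then have im: "f \<mu> \<nu>0 ` topspace (space (X \<mu>)) \<subseteq> topspace (space (X \<nu>0))"
            by (rule continuous_map_image_subset_topspace)
          have "inj_on (f \<nu>0 \<nu>) (f \<mu> \<nu>0 ` topspace (space (X \<mu>)))" using R im inj_on_subset by blast
          then have "inj_on (f \<nu>0 \<nu> \<circ> f \<mu> \<nu>0) (topspace (space (X \<mu>)))" using i1 comp_inj_on by blast
          moreover have eq: "\<forall>x\<in>topspace (space (X \<mu>)). f \<nu>0 \<nu> (f \<mu> \<nu>0 x) = f \<mu> \<nu> x"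
            using cmp m0 s0(1) nl by (meson order.strict_implies_order)
          moreover have "inj_on (f \<nu>0 \<nu> \<circ> f \<mu> \<nu>0) (topspace (space (X \<mu>))) = inj_on (f \<mu> \<nu>) (topspace (space (X \<mu>)))"
            by (rule inj_on_cong) (use eq in simp)
          ultimately show ?thesis by simp
        qed
        then show ?thesis using R unfolding Inv_def by blast
      next
        case L
        have cc: "chain_colimit \<nu> X f (X \<nu>) (\<lambda>\<mu>. f \<mu> \<nu>)" using lim nl L by blast
        have R: "(\<forall>\<mu><\<nu>. inj_on (f \<mu> \<nu>) (topspace (space (X \<mu>)))) \<and> (\<forall>p\<in>paths (X \<nu>). LIb p) \<and> (\<forall>p\<in>paths (X \<nu>). \<forall>q\<in>paths (X \<nu>). DJ p q)"
        proof (rule colimit_step[OF cc])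
          show "\<forall>\<mu><\<nu>. mdspace (X \<mu>)" using md nl by auto
          show "\<forall>\<mu><\<nu>. \<forall>p\<in>paths (X \<mu>). LIb p" using IH unfolding Inv_def by blast
          show "\<forall>\<mu><\<nu>. \<forall>p\<in>paths (X \<mu>). \<forall>q\<in>paths (X \<mu>). DJ p q" using IH unfolding Inv_def by blast
          show "\<forall>\<mu> \<sigma>. \<mu> \<le> \<sigma> \<and> \<sigma> < \<nu> \<longrightarrow> inj_on (f \<mu> \<sigma>) (topspace (space (X \<mu>)))"
            using IH unfolding Inv_def by blast
          show "\<forall>\<mu> \<sigma>. \<mu> \<le> \<sigma> \<and> \<sigma> < \<nu> \<longrightarrow> mdmap (X \<mu>) (X \<sigma>) (f \<mu> \<sigma>)"
            using mm nl by auto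
          show "\<forall>\<sigma><\<nu>. \<forall>x\<in>topspace (space (X \<sigma>)). f \<sigma> \<sigma> x = x" using idf nl by auto
        qed
        have "inj_on (f \<mu> \<nu>) (topspace (space (X \<mu>)))" if mu: "\<mu> \<le> \<nu>" for \<mu>
        proof (cases "\<mu> = \<nu>")
          case True then show ?thesis using idinj by simp
        next
          case False
          then show ?thesis using R mu by auto
        qed
        then show ?thesis using R unfolding Inv_def by blast
      qed
    qed
  qed
  have "Inv lam" using key by blast
  then have "LIb p" using assms(2) unfolding Inv_def by blast
  then show ?thesis using LI_iff by blast
qed

end
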